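(* Let $m\geq n$ and $k$ be integers with $2\leq k\leq n$. Then $$ext(m,n,(k-1)K_2)+2\leq rb(K_{m,n},kK_2)\leq ext(m,n,kK_2)+1.$$
   Context: $kK_2$ denotes a matching with $k$ edges, and $K_{m,n}$ the complete bipartite graph with parts of sizes $m$ and $n$. For a graph $H$, $ext(m,n,H)$ is the maximum number of edges of a bipartite graph with bipartition $A\cup B$, $|A|=m$, $|B|=n$, containing no subgraph isomorphic to $H$. An edge-coloring contains a rainbow copy of $H$ if there is a subgraph isomorphic to $H$ whose edges have pairwise distinct colors. $rb(G,H)$ is the minimum number $r$ such that every edge-coloring of $G$ using at least $r$ colors contains a rainbow copy of $H$ (equivalently, one plus the maximum number of colors in an edge-coloring of $G$ with no rainbow $H$). *)

theory Defs
  imports Main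
begin

definition Kmn_edges :: "nat \<Rightarrow> nat \<Rightarrow> (nat \<times> nat) set" where
  "Kmn_edges m n = {..<m} \<times> {..<n}"

definition is_matching :: "(nat \<times> nat) set \<Rightarrow> bool" where
  "is_matching M \<longleftrightarrow> (\<forall>e\<in>M. \<forall>e'\<in>M. e \<noteq> e' \<longrightarrow> fst e \<noteq> fst e' \<and> snd e \<noteq> snd e')"

definition has_kmatching :: "nat \<Rightarrow> (nat \<times> nat) set \<Rightarrow> bool" where
  "has_kmatching k F \<longleftrightarrow> (\<exists>M\<subseteq>F. card M = k \<and> is_matching M)"

definition ext_matching :: "nat \<Rightarrow> nat \<Rightarrow> nat \<Rightarrow> nat" where
  "ext_matching m n k = Max {card F | F. F \<subseteq> Kmn_edges m n \<and> \<not> has_kmatching k F}"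

definition has_rainbow_kmatching :: "nat \<Rightarrow> nat \<Rightarrow> nat \<Rightarrow> (nat \<times> nat \<Rightarrow> nat) \<Rightarrow> bool" where
  "has_rainbow_kmatching m n k c \<longleftrightarrow>
     (\<exists>M\<subseteq>Kmn_edges m n. card M = k \<and> is_matching M \<and> inj_on c M)"

definition rb_matching :: "nat \<Rightarrow> nat \<Rightarrow> nat \<Rightarrow> nat" where
  "rb_matching m n k = (LEAST r. \<forall>c :: nat \<times> nat \<Rightarrow> nat.
      r \<le> card (c ` Kmn_edges m n) \<longrightarrow> has_rainbow_kmatching m n k c)"

end

theory Submission
  imports Defs
begin

lemma fin_K: "finite (Kmn_edges m n)"
  unfolding Kmn_edges_def by simp

lemma ext_ge:
  assumes "F \<subseteq> Kmn_edges m n" "\<not> has_kmatching k F"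
  shows "card F \<le> ext_matching m n k"
proof -
  have "finite {card F | F. F \<subseteq> Kmn_edges m n \<and> \<not> has_kmatching k F}"
  proof (rule finite_subset)
    show "{card F | F. F \<subseteq> Kmn_edges m n \<and> \<not> has_kmatching k F} \<subseteq> card ` Pow (Kmn_edges m n)"
      by auto
  qed (simp add: fin_K)
  then show ?thesis unfolding ext_matching_def using assms by (intro Max_ge) auto
qed

lemma ext_ex:
  assumes "k \<ge> 1"
  shows "\<exists>F. F \<subseteq> Kmn_edges m n \<and> \<not> has_kmatching k F \<and> card F = ext_matching m n k"
proof -
  let ?S = "{card F | F. F \<subseteq> Kmn_edges m n \<and> \<not> has_kmatching k F}"
  have "finite ?S"
  proof (rule finite_subset)
    show "?S \<subseteq> card ` Pow (Kmn_edges m n)"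
      by auto
  qed (simp add: fin_K)
  moreover have "\<not> has_kmatching k {}" using assms unfolding has_kmatching_def by auto
  hence "?S \<noteq> {}" by auto
  ultimately have "ext_matching m n k \<in> ?S" unfolding ext_matching_def by (rule Max_in)
  thus ?thesis by auto
qed

lemma upper:
  assumes "ext_matching m n k + 1 \<le> card (c ` Kmn_edges m n)"
  shows "has_rainbow_kmatching m n k c"
proof -
  obtain F where F: "F \<subseteq> Kmn_edges m n" "inj_on c F" "c ` Kmn_edges m n = c ` F"
    using subset_image_inj[of "c ` Kmn_edges m n" c "Kmn_edges m n"] by auto
  have "card F = card (c ` Kmn_edges m n)" using F(2,3) card_image[OF F(2)] by simp
  hence "\<not> card F \<le> ext_matching m n k" using assms by simp
  hence "has_kmatching k F" using ext_ge[OF F(1)] by blast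
  then obtain M where M: "M \<subseteq> F" "card M = k" "is_matching M" unfolding has_kmatching_def by auto
  have "inj_on c M" using F(2) M(1) by (rule inj_on_subset)
  moreover have "M \<subseteq> Kmn_edges m n" using M(1) F(1) by (rule subset_trans)
  ultimately show ?thesis unfolding has_rainbow_kmatching_def using M(2,3) by blast
qed

lemma kmatch_K:
  assumes "j \<le> n" "n \<le> m"
  shows "has_kmatching j (Kmn_edges m n)"
proof -
  let ?M = "(\<lambda>i. (i,i)) ` {..<j}"
  have "card ?M = j" by (subst card_image) (auto simp: inj_on_def)
  moreover have "?M \<subseteq> Kmn_edges m n" using assms unfolding Kmn_edges_def by auto
  moreover have "is_matching ?M" unfolding is_matching_def by auto
  ultimately show ?thesis unfolding has_kmatching_def by blast
qed

lemma lower_col: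
  assumes "n \<le> m" "2 \<le> k" "k \<le> n"
  shows "\<exists>c. card (c ` Kmn_edges m n) = ext_matching m n (k - 1) + 1 \<and> \<not> has_rainbow_kmatching m n k c"
proof -
  obtain F where F: "F \<subseteq> Kmn_edges m n" "\<not> has_kmatching (k-1) F" "card F = ext_matching m n (k-1)"
    using ext_ex[of "k-1" m n] assms(2) by fastforce
  have "F \<noteq> Kmn_edges m n" using F(2) kmatch_K[of "k-1" n m] assms by auto
  then obtain e0 where e0: "e0 \<in> Kmn_edges m n" "e0 \<notin> F" using F(1) by blast
  define c where "c = (\<lambda>e::nat\<times>nat. if e \<in> F then Suc (fst e * n + snd e) else 0)"
  have injF: "inj_on c F"
  proof (rule inj_onI)
    fix x y assume xy: "x \<in> F" "y \<in> F" "c x = c y"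
    then have "fst x * n + snd x = fst y * n + snd y" unfolding c_def by auto
    moreover have "snd x < n" "snd y < n" using xy F(1) unfolding Kmn_edges_def by auto
    have "snd x = (fst x * n + snd x) mod n" using \<open>snd x < n\<close> by simp
    moreover have "snd y = (fst y * n + snd y) mod n" using \<open>snd y < n\<close> by simp
    ultimately have s: "snd x = snd y" using \<open>fst x * n + snd x = fst y * n + snd y\<close> by simp
    hence "fst x * n = fst y * n" using \<open>fst x * n + snd x = fst y * n + snd y\<close> by simp
    moreover have "n > 0" using \<open>snd x < n\<close> by simp
    ultimately have "fst x = fst y" by simp
    thus "x = y" using s by (simp add: prod_eq_iff)
  qed
  have img: "c ` Kmn_edges m n = insert 0 (c ` F)"
  proof
    show "c ` Kmn_edges m n \<subseteq> insert 0 (c ` F)" unfolding c_def by auto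
    show "insert 0 (c ` F) \<subseteq> c ` Kmn_edges m n"
      using e0 F(1) unfolding c_def by (auto intro!: image_eqI[of 0 _ e0])
  qed
  have "0 \<notin> c ` F" unfolding c_def by auto
  moreover have "finite F" using F(1) fin_K finite_subset by blast
  ultimately have cc: "card (c ` Kmn_edges m n) = card F + 1"
    using img injF by (simp add: card_image)
  have "\<not> has_rainbow_kmatching m n k c"
  proof
    assume "has_rainbow_kmatching m n k c"
    then obtain M where M: "M \<subseteq> Kmn_edges m n" "card M = k" "is_matching M" "inj_on c M"
      unfolding has_rainbow_kmatching_def by auto
    have finM: "finite M" using M(1) fin_K finite_subset by blast
    have "card (M - F) \<le> Suc 0"
    proof (subst card_le_Suc0_iff_eq)
      show "finite (M - F)" using finM by simp
      show "\<forall>x\<in>M - F. \<forall>y\<in>M - F. x = y"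
        using M(4) unfolding inj_on_def c_def by auto
    qed
    moreover have "card M = card (M \<inter> F) + card (M - F)"
      using finM by (metis card_Int_Diff)
    ultimately have "k - 1 \<le> card (M \<inter> F)" using M(2) by linarith
    then obtain N where N: "N \<subseteq> M \<inter> F" "card N = k - 1"
      using obtain_subset_with_card_n by metis
    have "is_matching N" using M(3) N(1) unfolding is_matching_def by blast
    hence "has_kmatching (k-1) F" using N unfolding has_kmatching_def by blast
    thus False using F(2) by simp
  qed
  moreover have "card (c ` Kmn_edges m n) = ext_matching m n (k - 1) + 1" using cc F(3) by simp
  ultimately show ?thesis by blast
qed

theorem mainTheorem3:
  fixes m n k :: nat
  assumes "n \<le> m" and "2 \<le> k" and "k \<le> n"
  shows "ext_matching m n (k - 1) + 2 \<le> rb_matching m n k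
       \<and> rb_matching m n k \<le> ext_matching m n k + 1"
proof
  let ?P = "\<lambda>r. \<forall>c :: nat \<times> nat \<Rightarrow> nat.
      r \<le> card (c ` Kmn_edges m n) \<longrightarrow> has_rainbow_kmatching m n k c"
  have P: "?P (ext_matching m n k + 1)" using upper by blast
  show "rb_matching m n k \<le> ext_matching m n k + 1"
    unfolding rb_matching_def by (rule Least_le[of ?P, OF P])
  have PL: "?P (rb_matching m n k)" unfolding rb_matching_def by (rule LeastI[of ?P, OF P])
  obtain c where c: "card (c ` Kmn_edges m n) = ext_matching m n (k - 1) + 1"
      "\<not> has_rainbow_kmatching m n k c"
    using lower_col[OF assms] by blast
  show "ext_matching m n (k - 1) + 2 \<le> rb_matching m n k"
  proof (rule ccontr)
    assume "\<not> ?thesis"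
    hence "rb_matching m n k \<le> card (c ` Kmn_edges m n)" using c(1) by simp
    thus False using PL c(2) by blast
  qed
qed

end
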